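(* For every $m\geq1$ and every $i\in\{1,\dots,N\}$, $$C^{(2m+1)}_{ii}\cdot v=\lambda_i\, C^{(2m)}_{ii}\cdot v-G_i\,C^{(2m)}_{-i,i}\cdot v.$$
   Context: Let $N\geq1$, $I=\{-N,\dots,-1,1,\dots,N\}$, and for $k\in I$ put $\bar k=0$ if $k>0$, $\bar k=1$ if $k<0$. The Lie superalgebra $\mathfrak{q}(N)$ over $\mathbb{C}$ is spanned by elements $F_{ij}$ ($i,j\in I$) with $F_{-i,-j}=F_{ij}$ (realized as $F_{ij}=E_{ij}+E_{-i,-j}\in\mathfrak{gl}(N|N)$), $F_{ij}$ of parity $\bar\imath+\bar\jmath\bmod 2$, and supercommutator $$[F_{ij}, F_{kl}] = \delta_{kj} F_{il} - (-1)^{(\bar{\imath}+ \bar{\jmath})(\bar{k} + \bar{l})} \delta_{il} F_{kj} + \delta_{k,-j} F_{-i,l} - (-1)^{(\bar{\imath} + \bar{\jmath})(\bar{k} + \bar{l})} \delta_{-i,l} F_{k,-j}.$$ For $n\geq1$ define $C^{(n)}_{ij}\in U(\mathfrak{q}(N))$ by $$C^{(n)}_{ij} = \sum_{k_1,\ldots,k_{n-1}\in I}F_{ik_1} (-1)^{\bar{k}_1} F_{k_1k_2} (-1)^{\bar{k}_2} \cdots F_{k_{n-2}k_{n-1}} (-1)^{\bar{k}_{n-1}} F_{k_{n-1}j}$$ (so $C^{(1)}_{ij}=F_{ij}$). For $i>0$ let $G_i=F_{-i,i}$ $(=F_{i,-i})$. Let $V$ be a representation of $\mathfrak{q}(N)$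 and $v\in V$ a vector such that $F_{ij}\cdot v=0$ whenever $|i|<|j|$, and $F_{ii}\cdot v=\lambda_i v$ for $i=1,\dots,N$, where $\lambda_1,\dots,\lambda_N\in\mathbb{C}$. *)

theory Defs
  imports Complex_Main
begin

definition Iset :: "nat \<Rightarrow> int set" where
  "Iset N = {k. k \<noteq> 0 \<and> \<bar>k\<bar> \<le> int N}"

definition par :: "int \<Rightarrow> nat" where
  "par k = (if k < 0 then 1 else 0)"

text \<open>The operator relations saying that the family F i j (i,j in I) of linear
  maps on the complex vector space V (scalar multiplication sc) is a representation
  of the Lie superalgebra q(N), F i j being the action of the element F_ij.\<close>
definition is_qN_rep :: "nat \<Rightarrow> (complex \<Rightarrow> 'v::ab_group_add \<Rightarrow> 'v) \<Rightarrow> (int \<Rightarrow> int \<Rightarrow> 'v \<Rightarrow> 'v) \<Rightarrow> bool" where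
  "is_qN_rep N sc F \<longleftrightarrow>
     vector_space sc \<and>
     (\<forall>i\<in>Iset N. \<forall>j\<in>Iset N. Vector_Spaces.linear sc sc (F i j)) \<and>
     (\<forall>i\<in>Iset N. \<forall>j\<in>Iset N. F (-i) (-j) = F i j) \<and>
     (\<forall>i\<in>Iset N. \<forall>j\<in>Iset N. \<forall>k\<in>Iset N. \<forall>l\<in>Iset N. \<forall>x.
        let s = (-1::complex) ^ ((par i + par j) * (par k + par l)) in
        F i j (F k l x) - sc s (F k l (F i j x)) =
          (if k = j then F i l x else 0)
          - sc s (if i = l then F k j x else 0)
          + (if k = -j then F (-i) l x else 0)
          - sc s (if -i = l then F k (-j) x else 0))"

text \<open>Action of C^{(n)}_{ij} (n >= 1):
  C^{(1)}_{ij} = F_ij,  C^{(n+1)}_{ij} = sum_k F_{ik} (-1)^{bar k} C^{(n)}_{kj}.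
  The value at n = 0 is junk and never used.\<close>
fun Cop :: "nat \<Rightarrow> (complex \<Rightarrow> 'v::ab_group_add \<Rightarrow> 'v) \<Rightarrow> (int \<Rightarrow> int \<Rightarrow> 'v \<Rightarrow> 'v)
              \<Rightarrow> nat \<Rightarrow> int \<Rightarrow> int \<Rightarrow> 'v \<Rightarrow> 'v" where
  "Cop N sc F 0 i j x = 0"
| "Cop N sc F (Suc 0) i j x = F i j x"
| "Cop N sc F (Suc (Suc n)) i j x =
     (\<Sum>k\<in>Iset N. F i k (sc ((-1) ^ par k) (Cop N sc F (Suc n) k j x)))"

end

theory Submission
  imports Defs
begin

definition sg :: "int \<Rightarrow> complex" where "sg k = (-1) ^ par k"
definition sig :: "int \<Rightarrow> int \<Rightarrow> int \<Rightarrow> int \<Rightarrow> complex" where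
  "sig a b c d = (-1) ^ ((par a + par b) * (par c + par d))"

lemma Iset_neg: "k \<in> Iset N \<Longrightarrow> -k \<in> Iset N" by (auto simp: Iset_def)
lemma Iset_nz: "k \<in> Iset N \<Longrightarrow> k \<noteq> 0" by (auto simp: Iset_def)
lemma finite_Iset[simp]: "finite (Iset N)"
  by (rule finite_subset[of _ "{-int N..int N}"]) (auto simp: Iset_def)

lemma sum_neg_reindex: "(\<Sum>k\<in>Iset N. g k) = (\<Sum>k\<in>Iset N. g (-k))"
  by (rule sum.reindex_bij_witness[of _ uminus uminus]) (auto simp: Iset_def)

lemma sg_neg: "k \<noteq> 0 \<Longrightarrow> sg (-k) = - sg k"
  by (auto simp: sg_def par_def)

lemma sig_mult: "sig a b c k * sig a b k d = sig a b c d"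
  by (auto simp: sig_def par_def)

lemma sig_coef1: "a \<noteq> 0 \<Longrightarrow> b \<noteq> 0 \<Longrightarrow> sig a b c a * sg a = sig a b c b * sg b"
  by (auto simp: sig_def sg_def par_def)
lemma sig_coef2: "a \<noteq> 0 \<Longrightarrow> b \<noteq> 0 \<Longrightarrow> sig a b c (-a) * sg (-a) = sig a b c (-b) * sg (-b)"
  by (auto simp: sig_def sg_def par_def)

context
  fixes N :: nat and sc :: "complex \<Rightarrow> 'v::ab_group_add \<Rightarrow> 'v" and F :: "int \<Rightarrow> int \<Rightarrow> 'v \<Rightarrow> 'v"
  assumes rep: "is_qN_rep N sc F"
begin


interpretation vs: vector_space sc using rep by (simp add: is_qN_rep_def)

lemma Fhom: "a \<in> Iset N \<Longrightarrow> b \<in> Iset N \<Longrightarrow> module_hom sc sc (F a b)"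
  using rep by (simp add: is_qN_rep_def module_hom_iff_linear)

lemma Fadd: "a \<in> Iset N \<Longrightarrow> b \<in> Iset N \<Longrightarrow> F a b (x + y) = F a b x + F a b y"
  using module_hom.add[OF Fhom] by blast
lemma Fscale: "a \<in> Iset N \<Longrightarrow> b \<in> Iset N \<Longrightarrow> F a b (sc r x) = sc r (F a b x)"
  using module_hom.scale[OF Fhom] by blast
lemma Fzero: "a \<in> Iset N \<Longrightarrow> b \<in> Iset N \<Longrightarrow> F a b 0 = 0"
  using module_hom.zero[OF Fhom] by blast
lemma Fdiff: "a \<in> Iset N \<Longrightarrow> b \<in> Iset N \<Longrightarrow> F a b (x - y) = F a b x - F a b y"
  using module_hom.diff[OF Fhom] by blast
lemma Fsum: "a \<in> Iset N \<Longrightarrow> b \<in> Iset N \<Longrightarrow> F a b (sum g A) = (\<Sum>k\<in>A. F a b (g k))"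
  using module_hom.sum[OF Fhom] by blast
lemma Fneg: "a \<in> Iset N \<Longrightarrow> b \<in> Iset N \<Longrightarrow> F a b (- x) = - F a b x"
  using module_hom.neg[OF Fhom] by blast
lemma Fsym: "a \<in> Iset N \<Longrightarrow> b \<in> Iset N \<Longrightarrow> F (-a) (-b) = F a b"
  using rep by (simp add: is_qN_rep_def)

lemma Frel: "i \<in> Iset N \<Longrightarrow> j \<in> Iset N \<Longrightarrow> k \<in> Iset N \<Longrightarrow> l \<in> Iset N \<Longrightarrow>
   F i j (F k l x) = sc (sig i j k l) (F k l (F i j x)) +
        ((if k = j then F i l x else 0)
          - sc (sig i j k l) (if i = l then F k j x else 0)
          + (if k = -j then F (-i) l x else 0)
          - sc (sig i j k l) (if -i = l then F k (-j) x else 0))"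
proof -
  assume h: "i \<in> Iset N" "j \<in> Iset N" "k \<in> Iset N" "l \<in> Iset N"
  from rep h have "F i j (F k l x) - sc (sig i j k l) (F k l (F i j x)) =
        (if k = j then F i l x else 0)
          - sc (sig i j k l) (if i = l then F k j x else 0)
          + (if k = -j then F (-i) l x else 0)
          - sc (sig i j k l) (if -i = l then F k (-j) x else 0)"
    unfolding is_qN_rep_def sig_def Let_def by blast
  then show ?thesis by (simp add: algebra_simps)
qed

lemma Fif: "a \<in> Iset N \<Longrightarrow> b \<in> Iset N \<Longrightarrow> F a b (if P then u else 0) = (if P then F a b u else 0)"
  by (auto simp: Fzero)
lemma scif: "sc r (if P then u else 0) = (if P then sc r u else 0)" by simp

lemma perk:
  assumes I: "a \<in> Iset N" "b \<in> Iset N" "c \<in> Iset N" "d \<in> Iset N" "k \<in> Iset N"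
    and IH: "F a b (C k d x) = sc (sig a b k d) (C k d (F a b x)) +
          ((if k = b then C a d x else 0)
          - sc (sig a b k d) (if a = d then C k b x else 0)
          + (if k = -b then C (-a) d x else 0)
          - sc (sig a b k d) (if -a = d then C k (-b) x else 0))"
  shows "F a b (F c k (sc (sg k) (C k d x))) =
     sc (sig a b c d) (F c k (sc (sg k) (C k d (F a b x)))) +
   ((if c = b then F a k (sc (sg k) (C k d x)) else 0)
 - (if k = a then sc (sig a b c a * sg a) (F c b (C a d x)) else 0)
 + (if c = -b then F (-a) k (sc (sg k) (C k d x)) else 0)
 - (if k = -a then sc (sig a b c (-a) * sg (-a)) (F c (-b) (C (-a) d x)) else 0)
 + (if k = b then sc (sig a b c b * sg b) (F c b (C a d x)) else 0)
 - (if a = d then sc (sig a b c d) (F c k (sc (sg k) (C k b x))) else 0)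
 + (if k = -b then sc (sig a b c (-b) * sg (-b)) (F c (-b) (C (-a) d x)) else 0)
 - (if -a = d then sc (sig a b c d) (F c k (sc (sg k) (C k (-b) x))) else 0))"
  (is "_ = ?rhs")
proof -
  have h2: "F a b (sc (sg k) (C k d x)) = sc (sg k) (sc (sig a b k d) (C k d (F a b x)) +
          ((if k = b then C a d x else 0)
          - sc (sig a b k d) (if a = d then C k b x else 0)
          + (if k = -b then C (-a) d x else 0)
          - sc (sig a b k d) (if -a = d then C k (-b) x else 0)))"
    using IH I by (simp add: Fscale)
  note h1 = Frel[OF I(1,2,3,5), of "sc (sg k) (C k d x)", unfolded h2]
  have sm: "sig a b c k * (sg k * sig a b k d) = sig a b c d * sg k"
    using sig_mult[of a b c k d] by (simp add: mult_ac)
  have E1: "sc (sig a b c k) (F c k (sc (sg k) (sc (sig a b k d) (C k d (F a b x))))) =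
     sc (sig a b c d) (F c k (sc (sg k) (C k d (F a b x))))"
    using I by (simp add: Fscale sm)
  have E2: "sc (sig a b c k) (if a = k then F c b (sc (sg k) (C k d x)) else 0) =
     (if k = a then sc (sig a b c a * sg a) (F c b (C a d x)) else 0)"
    using I by (cases "k = a") (auto simp: Fscale)
  have E3: "sc (sig a b c k) (if - a = k then F c (- b) (sc (sg k) (C k d x)) else 0) =
     (if k = -a then sc (sig a b c (-a) * sg (-a)) (F c (-b) (C (-a) d x)) else 0)"
    using I by (cases "k = -a") (auto simp: Fscale Iset_neg)
  have E4: "sc (sig a b c k) (F c k (sc (sg k) (if k = b then C a d x else 0))) =
     (if k = b then sc (sig a b c b * sg b) (F c b (C a d x)) else 0)"
    using I by (cases "k = b") (auto simp: Fscale Fzero)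
  have E5: "sc (sig a b c k) (F c k (sc (sg k) (sc (sig a b k d) (if a = d then C k b x else 0)))) =
     (if a = d then sc (sig a b c d) (F c k (sc (sg k) (C k b x))) else 0)"
    using I by (cases "a = d") (auto simp: Fscale Fzero sm sig_mult)
  have E6: "sc (sig a b c k) (F c k (sc (sg k) (if k = -b then C (-a) d x else 0))) =
     (if k = -b then sc (sig a b c (-b) * sg (-b)) (F c (-b) (C (-a) d x)) else 0)"
    using I by (cases "k = -b") (auto simp: Fscale Fzero)
  have E7: "sc (sig a b c k) (F c k (sc (sg k) (sc (sig a b k d) (if -a = d then C k (-b) x else 0)))) =
     (if -a = d then sc (sig a b c d) (F c k (sc (sg k) (C k (-b) x))) else 0)"
    using I by (cases "-a = d") (auto simp: Fscale Fzero sm sig_mult)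
  have "F a b (F c k (sc (sg k) (C k d x))) =
     sc (sig a b c k) (F c k (sc (sg k) (sc (sig a b k d) (C k d (F a b x))))) 
   + sc (sig a b c k) (F c k (sc (sg k) (if k = b then C a d x else 0)))
   - sc (sig a b c k) (F c k (sc (sg k) (sc (sig a b k d) (if a = d then C k b x else 0))))
   + sc (sig a b c k) (F c k (sc (sg k) (if k = -b then C (-a) d x else 0)))
   - sc (sig a b c k) (F c k (sc (sg k) (sc (sig a b k d) (if -a = d then C k (-b) x else 0))))
   + ((if c = b then F a k (sc (sg k) (C k d x)) else 0)
   - sc (sig a b c k) (if a = k then F c b (sc (sg k) (C k d x)) else 0)
   + (if c = - b then F (- a) k (sc (sg k) (C k d x)) else 0)
   - sc (sig a b c k) (if - a = k then F c (- b) (sc (sg k) (C k d x)) else 0))"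
    unfolding h1 using I
    by (simp only: Fadd Fdiff vs.scale_right_distrib vs.scale_right_diff_distrib) (simp add: algebra_simps)
  also have "\<dots> = ?rhs" unfolding E1 E2 E3 E4 E5 E6 E7 by (simp add: algebra_simps)
  finally show ?thesis .
qed


lemma Cop_SS: "Cop N sc F (Suc (Suc n)) i j x = (\<Sum>k\<in>Iset N. F i k (sc (sg k) (Cop N sc F (Suc n) k j x)))"
  by (simp add: sg_def)

lemma comm:
  "a \<in> Iset N \<Longrightarrow> b \<in> Iset N \<Longrightarrow> c \<in> Iset N \<Longrightarrow> d \<in> Iset N \<Longrightarrow>
   F a b (Cop N sc F (Suc n) c d x) = sc (sig a b c d) (Cop N sc F (Suc n) c d (F a b x)) +
          ((if c = b then Cop N sc F (Suc n) a d x else 0)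
          - sc (sig a b c d) (if a = d then Cop N sc F (Suc n) c b x else 0)
          + (if c = -b then Cop N sc F (Suc n) (-a) d x else 0)
          - sc (sig a b c d) (if -a = d then Cop N sc F (Suc n) c (-b) x else 0))"
proof (induction n arbitrary: a b c d x)
  case 0
  then show ?case by (simp only: Cop.simps) (rule Frel[OF 0])
next
  case (Suc n)
  let ?C = "Cop N sc F (Suc n)"
  let ?C' = "Cop N sc F (Suc (Suc n))"
  note I = Suc.prems
  have pk: "\<And>k. k \<in> Iset N \<Longrightarrow> F a b (F c k (sc (sg k) (?C k d x))) =
     sc (sig a b c d) (F c k (sc (sg k) (?C k d (F a b x)))) +
   ((if c = b then F a k (sc (sg k) (?C k d x)) else 0)
 - (if k = a then sc (sig a b c a * sg a) (F c b (?C a d x)) else 0)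
 + (if c = -b then F (-a) k (sc (sg k) (?C k d x)) else 0)
 - (if k = -a then sc (sig a b c (-a) * sg (-a)) (F c (-b) (?C (-a) d x)) else 0)
 + (if k = b then sc (sig a b c b * sg b) (F c b (?C a d x)) else 0)
 - (if a = d then sc (sig a b c d) (F c k (sc (sg k) (?C k b x))) else 0)
 + (if k = -b then sc (sig a b c (-b) * sg (-b)) (F c (-b) (?C (-a) d x)) else 0)
 - (if -a = d then sc (sig a b c d) (F c k (sc (sg k) (?C k (-b) x))) else 0))"
    by (rule perk[OF I], assumption, rule Suc.IH[OF I(1,2) _ I(4)], assumption)
  have S1: "(\<Sum>k\<in>Iset N. if c = b then F a k (sc (sg k) (?C k d x)) else 0) = (if c = b then ?C' a d x else 0)"
    by (cases "c = b") (simp_all add: Cop_SS sg_def)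
  have S2: "(\<Sum>k\<in>Iset N. if k = a then sc (sig a b c a * sg a) (F c b (?C a d x)) else 0) = sc (sig a b c a * sg a) (F c b (?C a d x))"
    using I by simp
  have S3: "(\<Sum>k\<in>Iset N. if c = -b then F (-a) k (sc (sg k) (?C k d x)) else 0) = (if c = -b then ?C' (-a) d x else 0)"
    by (cases "c = -b") (simp_all add: Cop_SS sg_def)
  have S4: "(\<Sum>k\<in>Iset N. if k = -a then sc (sig a b c (-a) * sg (-a)) (F c (-b) (?C (-a) d x)) else 0) = sc (sig a b c (-a) * sg (-a)) (F c (-b) (?C (-a) d x))"
    using I by (simp add: Iset_neg)
  have S5: "(\<Sum>k\<in>Iset N. if k = b then sc (sig a b c b * sg b) (F c b (?C a d x)) else 0) = sc (sig a b c b * sg b) (F c b (?C a d x))"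
    using I by simp
  have S6: "(\<Sum>k\<in>Iset N. if a = d then sc (sig a b c d) (F c k (sc (sg k) (?C k b x))) else 0) = sc (sig a b c d) (if a = d then ?C' c b x else 0)"
    by (cases "a = d") (simp_all add: Cop_SS sg_def vs.scale_sum_right)
  have S7: "(\<Sum>k\<in>Iset N. if k = -b then sc (sig a b c (-b) * sg (-b)) (F c (-b) (?C (-a) d x)) else 0) = sc (sig a b c (-b) * sg (-b)) (F c (-b) (?C (-a) d x))"
    using I by (simp add: Iset_neg)
  have S8: "(\<Sum>k\<in>Iset N. if -a = d then sc (sig a b c d) (F c k (sc (sg k) (?C k (-b) x))) else 0) = sc (sig a b c d) (if -a = d then ?C' c (-b) x else 0)"
    by (cases "-a = d") (simp_all add: Cop_SS sg_def vs.scale_sum_right)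
  have S0: "(\<Sum>k\<in>Iset N. sc (sig a b c d) (F c k (sc (sg k) (?C k d (F a b x))))) = sc (sig a b c d) (?C' c d (F a b x))"
    by (simp add: Cop_SS sg_def vs.scale_sum_right)
  have co1: "sig a b c a * sg a = sig a b c b * sg b" using I by (intro sig_coef1 Iset_nz)
  have co2: "sig a b c (-a) * sg (-a) = sig a b c (-b) * sg (-b)" using I by (intro sig_coef2 Iset_nz)
  have "F a b (?C' c d x) = (\<Sum>k\<in>Iset N. F a b (F c k (sc (sg k) (?C k d x))))"
    using I by (simp add: Cop_SS sg_def Fsum)
  also have "\<dots> = (\<Sum>k\<in>Iset N. sc (sig a b c d) (F c k (sc (sg k) (?C k d (F a b x)))) +
   ((if c = b then F a k (sc (sg k) (?C k d x)) else 0)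
 - (if k = a then sc (sig a b c a * sg a) (F c b (?C a d x)) else 0)
 + (if c = -b then F (-a) k (sc (sg k) (?C k d x)) else 0)
 - (if k = -a then sc (sig a b c (-a) * sg (-a)) (F c (-b) (?C (-a) d x)) else 0)
 + (if k = b then sc (sig a b c b * sg b) (F c b (?C a d x)) else 0)
 - (if a = d then sc (sig a b c d) (F c k (sc (sg k) (?C k b x))) else 0)
 + (if k = -b then sc (sig a b c (-b) * sg (-b)) (F c (-b) (?C (-a) d x)) else 0)
 - (if -a = d then sc (sig a b c d) (F c k (sc (sg k) (?C k (-b) x))) else 0)))"
    by (rule sum.cong[OF refl]) (rule pk)
  also have "\<dots> = sc (sig a b c d) (?C' c d (F a b x)) + ((if c = b then ?C' a d x else 0)
          - sc (sig a b c d) (if a = d then ?C' c b x else 0)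
          + (if c = -b then ?C' (-a) d x else 0)
          - sc (sig a b c d) (if -a = d then ?C' c (-b) x else 0))"
    unfolding sum.distrib sum_subtractf S0 S1 S2 S3 S4 S5 S6 S7 S8 co1 co2
    using I by (simp add: algebra_simps Iset_neg)
  finally show ?case .
qed


lemma Cop_scale: "a \<in> Iset N \<Longrightarrow> b \<in> Iset N \<Longrightarrow>
   Cop N sc F (Suc n) a b (sc r x) = sc r (Cop N sc F (Suc n) a b x)"
proof (induction n arbitrary: a b x)
  case 0
  then show ?case by (simp add: Fscale)
next
  case (Suc n)
  show ?case unfolding Cop_SS vs.scale_sum_right
    by (rule sum.cong[OF refl]) (simp add: Suc Fscale vs.scale_left_commute[of r])
qed

lemma Cop_zero: "a \<in> Iset N \<Longrightarrow> b \<in> Iset N \<Longrightarrow> Cop N sc F (Suc n) a b 0 = 0"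
  using Cop_scale[of a b n 0 0] by simp

lemma Cop_sym: "c \<in> Iset N \<Longrightarrow> d \<in> Iset N \<Longrightarrow>
   Cop N sc F (Suc n) (-c) (-d) x = sc ((-1)^n) (Cop N sc F (Suc n) c d x)"
proof (induction n arbitrary: c d x)
  case 0
  then show ?case by (simp add: Fsym)
next
  case (Suc n)
  have "Cop N sc F (Suc (Suc n)) (-c) (-d) x =
     (\<Sum>k\<in>Iset N. F (-c) (-k) (sc (sg (-k)) (Cop N sc F (Suc n) (-k) (-d) x)))"
    unfolding Cop_SS by (rule sum_neg_reindex)
  also have "\<dots> = (\<Sum>k\<in>Iset N. sc ((-1)^Suc n) (F c k (sc (sg k) (Cop N sc F (Suc n) k d x))))"
  proof (rule sum.cong[OF refl])
    fix k assume k: "k \<in> Iset N"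
    show "F (-c) (-k) (sc (sg (-k)) (Cop N sc F (Suc n) (-k) (-d) x)) =
       sc ((-1)^Suc n) (F c k (sc (sg k) (Cop N sc F (Suc n) k d x)))"
      using k Suc by (simp add: Fsym Suc.IH sg_neg Iset_nz Fscale Fneg mult.commute)
  qed
  also have "\<dots> = sc ((-1)^Suc n) (Cop N sc F (Suc (Suc n)) c d x)"
    unfolding Cop_SS vs.scale_sum_right ..
  finally show ?case .
qed

lemma Cop_vanish:
  assumes hw: "\<And>a b. a \<in> Iset N \<Longrightarrow> b \<in> Iset N \<Longrightarrow> \<bar>a\<bar> < \<bar>b\<bar> \<Longrightarrow> F a b v = 0"
  shows "a \<in> Iset N \<Longrightarrow> b \<in> Iset N \<Longrightarrow> \<bar>a\<bar> < \<bar>b\<bar> \<Longrightarrow> Cop N sc F (Suc n) a b v = 0"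
proof (induction n arbitrary: a b)
  case 0
  then show ?case by (simp add: hw)
next
  case (Suc n)
  show ?case unfolding Cop_SS
  proof (rule sum.neutral, rule ballI)
    fix k assume k: "k \<in> Iset N"
    show "F a k (sc (sg k) (Cop N sc F (Suc n) k b v)) = 0"
    proof (cases "\<bar>k\<bar> < \<bar>b\<bar>")
      case True
      then show ?thesis using Suc.IH[OF k Suc.prems(2) True] k Suc.prems by (simp add: Fzero)
    next
      case False
      then have ak: "\<bar>a\<bar> < \<bar>k\<bar>" using Suc.prems by simp
      have ne: "a \<noteq> b" "-a \<noteq> b" using Suc.prems by auto
      have "F a k (Cop N sc F (Suc n) k b v) = 0"
        using ne comm[OF Suc.prems(1) k k Suc.prems(2), of n v] hw[OF Suc.prems(1) k ak]
          Suc.IH[OF Suc.prems] Suc.prems k Iset_nz[OF k]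
        by (simp add: Cop_zero)
      then show ?thesis using Suc.prems k by (simp add: Fscale)
    qed
  qed
qed

lemma half_zero: "(S::'v) = - S \<Longrightarrow> S = 0"
proof -
  assume h: "S = - S"
  have "S = sc (1/2) S + sc (1/2) S" by (simp flip: vs.scale_left_distrib)
  also have "\<dots> = sc (1/2) (S + S)" by (simp add: vs.scale_right_distrib)
  also have "S + S = 0" using h by (metis add.right_inverse)
  finally show "S = 0" by simp
qed

end

lemma sig_sq: "i > 0 \<Longrightarrow> sig i k k i = sg k" by (auto simp: sig_def sg_def par_def)
lemma sg_sq: "sg k * sg k = 1" by (auto simp: sg_def par_def)
lemma sg_pos: "i > 0 \<Longrightarrow> sg i = 1" by (auto simp: sg_def par_def)
lemma sig_pos: "i > 0 \<Longrightarrow> sig i i i i = 1" by (auto simp: sig_def par_def)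

theorem mainTheorem6:
  fixes N :: nat
    and sc :: "complex \<Rightarrow> 'v::ab_group_add \<Rightarrow> 'v"
    and F :: "int \<Rightarrow> int \<Rightarrow> 'v \<Rightarrow> 'v"
    and lam :: "int \<Rightarrow> complex"
    and v :: 'v
    and m :: nat and i :: int
  assumes "N \<ge> 1"
    and rep: "is_qN_rep N sc F"
    and hw: "\<And>a b. a \<in> Iset N \<Longrightarrow> b \<in> Iset N \<Longrightarrow> \<bar>a\<bar> < \<bar>b\<bar> \<Longrightarrow> F a b v = 0"
    and wt: "\<And>a. a \<in> {1..int N} \<Longrightarrow> F a a v = sc (lam a) v"
    and "m \<ge> 1"
    and "i \<in> {1..int N}"
  shows "Cop N sc F (2*m+1) i i v
           = sc (lam i) (Cop N sc F (2*m) i i v) - F (-i) i (Cop N sc F (2*m) (-i) i v)"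
proof -
  interpret vs: vector_space sc using rep by (simp add: is_qN_rep_def)
  define n' where "n' = 2*m - 1"
  have n': "2*m = Suc n'" using \<open>m \<ge> 1\<close> by (simp add: n'_def)
  have odd: "(-1::complex)^n' = -1" using \<open>m \<ge> 1\<close> unfolding n'_def
    by (simp add: neg_one_odd_power)
  have ipos: "i > 0" using \<open>i \<in> {1..int N}\<close> by simp
  have iI: "i \<in> Iset N" "-i \<in> Iset N" using \<open>i \<in> {1..int N}\<close> by (auto simp: Iset_def)
  let ?C = "Cop N sc F (Suc n')"
  define g where "g k = sc (sg k) (?C i i v) - ?C k k v" for k
  define h where "h k = (if i < \<bar>k\<bar> then g k else 0)" for k
  have step: "F i k (sc (sg k) (?C k i v)) =
      (if k = i then sc (lam i) (?C i i v) else 0) - (if k = -i then F (-i) i (?C (-i) i v) else 0) + h k"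
    if k: "k \<in> Iset N" for k
  proof -
    have kz: "k \<noteq> 0" using k by (rule Iset_nz)
    consider "k = i" | "k = -i" | "\<bar>k\<bar> < i" | "i < \<bar>k\<bar>" by linarith
    then show ?thesis
    proof cases
      case 1
      have "F i i (?C i i v) = sc (lam i) (?C i i v)"
        using comm[OF rep iI(1) iI(1) iI(1) iI(1), of n' v] ipos wt[OF \<open>i \<in> {1..int N}\<close>]
        by (simp add: sig_pos Cop_scale[OF rep iI(1) iI(1)])
      then show ?thesis using 1 ipos by (simp add: h_def sg_pos)
    next
      case 2
      have "F i (-i) = F (-i) i" using Fsym[OF rep iI(2) iI(1)] by simp
      then show ?thesis using 2 ipos iI by (simp add: h_def sg_neg Fneg[OF rep] sg_pos)
    next
      case 3
      have "?C k i v = 0" using Cop_vanish[OF rep hw k iI(1)] 3 ipos by simp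
      then show ?thesis using 3 k iI ipos by (auto simp: h_def Fzero[OF rep])
    next
      case 4
      have "F i k (?C k i v) = ?C i i v - sc (sg k) (?C k k v)"
        using comm[OF rep iI(1) k k iI(1), of n' v] hw[OF iI(1) k] 4 ipos kz
        by (simp add: Cop_zero[OF rep k iI(1)] sig_sq)
      then show ?thesis using 4 k iI ipos kz
        by (auto simp: h_def g_def Fscale[OF rep] vs.scale_right_diff_distrib sg_sq)
    qed
  qed
  have hodd: "h (-k) = - h k" if k: "k \<in> Iset N" for k
  proof -
    have "?C (-k) (-k) v = - ?C k k v"
      using Cop_sym[OF rep k k, of n' v] odd by simp
    then show ?thesis using Iset_nz[OF k] by (simp add: h_def g_def sg_neg)
  qed
  have hsum: "(\<Sum>k\<in>Iset N. h k) = 0"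
  proof (rule half_zero[OF rep])
    have "(\<Sum>k\<in>Iset N. h k) = (\<Sum>k\<in>Iset N. h (-k))" by (rule sum_neg_reindex)
    also have "\<dots> = (\<Sum>k\<in>Iset N. - h k)" by (rule sum.cong[OF refl]) (rule hodd)
    finally show "(\<Sum>k\<in>Iset N. h k) = - (\<Sum>k\<in>Iset N. h k)" by (simp add: sum_negf)
  qed
  have "Cop N sc F (2*m+1) i i v = (\<Sum>k\<in>Iset N. F i k (sc (sg k) (?C k i v)))"
    unfolding n' Suc_eq_plus1[symmetric] by (rule Cop_SS[OF rep])
  also have "\<dots> = (\<Sum>k\<in>Iset N. (if k = i then sc (lam i) (?C i i v) else 0)
        - (if k = -i then F (-i) i (?C (-i) i v) else 0) + h k)"
    by (rule sum.cong[OF refl]) (rule step)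
  also have "\<dots> = sc (lam i) (?C i i v) - F (-i) i (?C (-i) i v)"
    unfolding sum.distrib sum_subtractf hsum using iI by simp
  finally show ?thesis unfolding n' .
qed

end
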